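(* Let $Q\in\mathcal{P}$ have balance coefficient $\beta>\tfrac12$. Then for every $0<v<4(\beta-\tfrac12)$, $$D^*(v,Q)=\mathrm{KL}_2\!\left(\beta-\tfrac{v}{2},\,\beta\right).$$
   Context: Let $(\Omega,\mathcal{F},\mu)$ be a finite or $\sigma$-finite measure space, and let $\mathcal{P}$ be the set of probability measures on $(\Omega,\mathcal{F})$ absolutely continuous with respect to $\mu$. For $P,Q\in\mathcal{P}$ the lower-case letters $p,q$ denote their densities with respect to $\mu$. The Kullback–Leibler divergence is $D(P\Vert Q)=\int \ln\frac{dP}{dQ}\,dP$ if $P\ll Q$, and $+\infty$ otherwise. The total variation distance is $V(P,Q)=\int_\Omega|p-q|\,d\mu$. For $v>0$ define $D^*(v,Q)=\inf\{D(P\Vert Q): P\in\mathcal{P},\ V(P,Q)\ge v\}$, with $\inf\emptyset=+\infty$. For $p,q\in[0,1]$ let $\mathrm{KL}_2(p,q)=p\ln\frac{p}{q}+(1-p)\ln\frac{1-p}{1-q}$, with the conventions $0\ln(0/x)=0$ and $a\ln(a/0)=+\infty$ for $a>0$. The range of $Q$ is $\mathcal{R}(Q)=\{Q(A):A\in\mathcal{F}\}$. The balance coefficient of $Q$ is $\beta=\inf\{x\in\mathcal{R}(Q): x\ge\tfrac12\}$. *)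

theory Defs
  imports "HOL-Probability.Probability"
begin

definition probs :: "'a measure \<Rightarrow> 'a measure set" where
  "probs \<mu> = {P. prob_space P \<and> sets P = sets \<mu> \<and> absolutely_continuous \<mu> P}"

definition dens :: "'a measure \<Rightarrow> 'a measure \<Rightarrow> 'a \<Rightarrow> real" where
  "dens \<mu> P = (\<lambda>x. enn2real (RN_deriv \<mu> P x))"

text \<open>For P abs. continuous wrt Q, the negative part of ln(dP/dQ) is always P-integrable,
so the integral either is finite (integrable case) or equals +infinity.\<close>
definition KL_div :: "'a measure \<Rightarrow> 'a measure \<Rightarrow> ereal" where
  "KL_div P Q =
     (if absolutely_continuous Q P \<and> sets P = sets Q then
        (if integrable P (\<lambda>x. ln (enn2real (RN_deriv Q P x)))
         then ereal (\<integral>x. ln (enn2real (RN_deriv Q P x)) \<partial>P)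
         else \<infinity>)
      else \<infinity>)"

definition TV :: "'a measure \<Rightarrow> 'a measure \<Rightarrow> 'a measure \<Rightarrow> real" where
  "TV \<mu> P Q = (\<integral>x. \<bar>dens \<mu> P x - dens \<mu> Q x\<bar> \<partial>\<mu>)"

text \<open>D*(v,Q) = inf of D(P||Q) over P in probs mu with V(P,Q) >= v (Inf of empty = infinity).\<close>
definition Dstar :: "'a measure \<Rightarrow> real \<Rightarrow> 'a measure \<Rightarrow> ereal" where
  "Dstar \<mu> v Q = Inf {KL_div P Q | P. P \<in> probs \<mu> \<and> TV \<mu> P Q \<ge> v}"

definition xlog_term :: "real \<Rightarrow> real \<Rightarrow> ereal" where
  "xlog_term a b = (if a = 0 then 0 else if b = 0 then \<infinity> else ereal (a * ln (a / b)))"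

definition KL2 :: "real \<Rightarrow> real \<Rightarrow> ereal" where
  "KL2 p q = xlog_term p q + xlog_term (1 - p) (1 - q)"

definition range_meas :: "'a measure \<Rightarrow> real set" where
  "range_meas Q = {measure Q A | A. A \<in> sets Q}"

definition balance_coeff :: "'a measure \<Rightarrow> real" where
  "balance_coeff Q = Inf {x \<in> range_meas Q. x \<ge> 1/2}"

end

theory Submission
  imports Defs
begin


definition KL2r :: "real \<Rightarrow> real \<Rightarrow> real" where
  "KL2r a b = a * ln (a / b) + (1 - a) * ln ((1 - a) / (1 - b))"

lemma xlnx_cont: "continuous_on {0..} (\<lambda>x::real. x * ln x)"
proof -
  have lim: "((\<lambda>x::real. x * ln x) \<longlongrightarrow> 0) (at_right 0)"
    unfolding filterlim_at_right_to_top
  proof -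
    have "((\<lambda>y::real. - (ln y / y)) \<longlongrightarrow> - 0) at_top"
      by (intro tendsto_minus ln_x_over_x_tendsto_0)
    moreover have "eventually (\<lambda>y::real. - (ln y / y) = inverse y * ln (inverse y)) at_top"
      using eventually_gt_at_top[of 0] by eventually_elim (simp add: ln_inverse divide_inverse)
    ultimately show "((\<lambda>y::real. inverse y * ln (inverse y)) \<longlongrightarrow> 0) at_top"
      by (simp add: tendsto_cong)
  qed
  show ?thesis unfolding continuous_on_def
  proof
    fix x :: real assume x: "x \<in> {0..}"
    show "((\<lambda>x. x * ln x) \<longlongrightarrow> x * ln x) (at x within {0..})"
    proof (cases "x = 0")
      case True
      have "at (0::real) within {0..} = at_right 0"
        by (simp add: at_within_Ici_at_right)
      then show ?thesis using True lim by simp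
    next
      case False
      with x have "x > 0" by simp
      then have "isCont (\<lambda>x. x * ln x) x" by (auto intro!: continuous_intros)
      then show ?thesis using tendsto_within_subset isCont_def by blast
    qed
  qed
qed

lemma xln_div: fixes x y :: real shows "0 \<le> x \<Longrightarrow> 0 < y \<Longrightarrow> x * ln (x / y) = x * ln x - x * ln y"
proof (cases "x = 0")
  case False
  assume "0 \<le> x" "0 < y"
  with False have "0 < x" by linarith
  with \<open>0 < y\<close> show ?thesis by (simp add: ln_div right_diff_distrib)
qed simp

lemma tangent:
  fixes x y c :: real
  assumes "0 \<le> x" "0 < y" "0 < c"
  shows "x * ln (x / y) \<ge> x * ln c + x - c * y"
proof (cases "x = 0")
  case True then show ?thesis using assms by simp
next
  case False
  then have x: "x > 0" using assms by simp
  have "ln (c * y / x) \<le> c * y / x - 1" using x assms by (intro ln_le_minus_one) simp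
  moreover have "ln (c * y / x) = ln c + ln y - ln x" using x assms by (simp add: ln_div ln_mult)
  ultimately have "ln c + ln y - ln x \<le> c * y / x - 1" by simp
  then have "x * (ln c + ln y - ln x) \<le> x * (c * y / x - 1)" using x by (intro mult_left_mono) auto
  then have "x * ln c + x * ln y - x * ln x \<le> c * y - x" using x by (simp add: algebra_simps)
  moreover have "x * ln (x / y) = x * ln x - x * ln y" using x assms by (simp add: ln_div algebra_simps)
  ultimately show ?thesis by simp
qed

lemma tangent2:
  assumes "0 \<le> a" "a \<le> 1" "0 < b" "b < 1" "0 < c1" "0 < c2"
  shows "KL2r a b \<ge> a * ln c1 + a - c1 * b + ((1 - a) * ln c2 + (1 - a) - c2 * (1 - b))"
  unfolding KL2r_def using tangent[of a b c1] tangent[of "1-a" "1-b" c2] assms by simp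

lemma ln_half:
  fixes x :: real assumes "1 \<le> x" shows "ln x \<le> (x - 1/x) / 2"
proof -
  let ?g = "\<lambda>x::real. (x - 1/x)/2 - ln x"
  have "?g 1 \<le> ?g x"
  proof (rule DERIV_nonneg_imp_increasing_open[of 1 x ?g])
    show "1 \<le> x" by fact
    fix t :: real assume t: "1 < t" "t < x"
    show "\<exists>y. DERIV ?g t :> y \<and> y \<ge> 0"
    proof (intro exI conjI)
      show "DERIV ?g t :> ((1 + 1/t^2)/2 - 1/t)"
        using t by (auto intro!: derivative_eq_intros simp: power2_eq_square field_simps)
      have "(1 + 1/t^2)/2 - 1/t = (1 - 1/t)^2 / 2" using t by (simp add: power2_eq_square field_simps)
      then show "(1 + 1/t^2)/2 - 1/t \<ge> 0" by (simp only:) simp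
    qed
  next
    show "continuous_on {1..x} ?g" by (auto intro!: continuous_intros)
  qed
  then show ?thesis by simp
qed

lemma xlnx_cont_comp:
  fixes f :: "real \<Rightarrow> real"
  assumes "continuous_on S f" "\<And>x. x \<in> S \<Longrightarrow> 0 \<le> f x"
  shows "continuous_on S (\<lambda>x. f x * ln (f x))"
  using continuous_on_compose2[OF xlnx_cont assms(1)] assms(2) by auto

lemma frac2:
  fixes u w p q A B :: real
  assumes "u \<noteq> 0" "w \<noteq> 0" "p \<noteq> 0" "q \<noteq> 0"
  shows "A / (2 * u * w) + B / (2 * p * q) = (A * p * q + B * u * w) / (2 * u * w * p * q)"
  using assms by (simp add: field_simps)

lemma frac3:
  fixes u p w q :: real
  assumes "u \<noteq> 0" "w \<noteq> 0" "p \<noteq> 0" "q \<noteq> 0"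
  shows "1 / (w * q) = (2 * u * p) / (2 * u * w * p * q)"
  using assms by (simp add: field_simps)

lemma slope_ineq:
  fixes u w :: real
  assumes "0 < u" "u < w" "w < 1" "1 - w \<le> u"
  shows "ln (w / u) + ln ((1 - u) / (1 - w)) \<le> (w - u) / (w * (1 - w))"
proof -
  have h1: "ln (w / u) \<le> (w / u - 1 / (w / u)) / 2" using assms by (intro ln_half) simp
  have h2: "ln ((1 - u) / (1 - w)) \<le> ((1 - u) / (1 - w) - 1 / ((1 - u) / (1 - w))) / 2"
    using assms by (intro ln_half) simp
  have e1: "(w / u - 1 / (w / u)) / 2 = (w - u) * ((w + u) / (2 * u * w))"
    using assms by (simp add: field_simps)
  have e2: "((1 - u) / (1 - w) - 1 / ((1 - u) / (1 - w))) / 2 = (w - u) * ((2 - u - w) / (2 * (1 - u) * (1 - w)))"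
    using assms by (simp add: field_simps)
  have e3: "(w - u) / (w * (1 - w)) = (w - u) * (1 / (w * (1 - w)))" by simp
  have key: "(w + u) / (2 * u * w) + (2 - u - w) / (2 * (1 - u) * (1 - w)) \<le> 1 / (w * (1 - w))"
  proof -
    have pos: "2 * u * w * (1 - u) * (1 - w) > 0" using assms by simp
    have nz: "u \<noteq> 0" "w \<noteq> 0" "1 - u \<noteq> 0" "1 - w \<noteq> 0" using assms by auto
    have "(w + u) * (1 - u) * (1 - w) + (2 - u - w) * u * w - 2 * u * (1 - u) = (w - u) * (1 - w - u)"
      by (simp add: algebra_simps)
    moreover have "(w - u) * (1 - w - u) \<le> 0" using assms by (intro mult_nonneg_nonpos) auto
    ultimately have N: "(w + u) * (1 - u) * (1 - w) + (2 - u - w) * u * w \<le> 2 * u * (1 - u)" by linarith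
    have eqL: "(w + u) / (2 * u * w) + (2 - u - w) / (2 * (1 - u) * (1 - w))
       = ((w + u) * (1 - u) * (1 - w) + (2 - u - w) * u * w) / (2 * u * w * (1 - u) * (1 - w))"
      by (rule frac2[OF nz])
    have eqR: "1 / (w * (1 - w)) = (2 * u * (1 - u)) / (2 * u * w * (1 - u) * (1 - w))"
      by (rule frac3[OF nz(1,2,3,4)])
    show ?thesis unfolding eqL eqR by (rule divide_right_mono[OF N]) (use pos in linarith)
  qed
  have "ln (w / u) + ln ((1 - u) / (1 - w)) \<le> (w - u) * ((w + u) / (2 * u * w)) + (w - u) * ((2 - u - w) / (2 * (1 - u) * (1 - w)))"
    using h1 h2 e1 e2 by linarith
  also have "\<dots> = (w - u) * ((w + u) / (2 * u * w) + (2 - u - w) / (2 * (1 - u) * (1 - w)))"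
    by (rule distrib_left[symmetric])
  also have "\<dots> \<le> (w - u) * (1 / (w * (1 - w)))"
    using key assms by (intro mult_left_mono) auto
  finally show ?thesis using e3 by linarith
qed

lemma down_case:
  assumes d: "0 < d" and bd: "1 - \<beta> \<le> \<beta> - d" and b1: "\<beta> < 1"
    and bb: "\<beta> \<le> b" "b < 1" and a: "0 \<le> a" "a \<le> b - d"
  shows "KL2r (\<beta> - d) \<beta> \<le> KL2r a b"
proof -
  define c1 where "c1 = (\<beta> - d) / \<beta>"
  define c2 where "c2 = (1 - \<beta> + d) / (1 - \<beta>)"
  have bpos: "0 < \<beta> - d" using bd b1 by linarith
  have c1p: "0 < c1" "c1 \<le> 1" using bpos d unfolding c1_def by (auto simp: field_simps)
  have c2p: "1 \<le> c2" using b1 d unfolding c2_def by (auto simp: field_simps)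
  have lnle: "ln c1 \<le> ln c2" using c1p c2p by simp
  have "c1 * \<beta> = \<beta> - d" using bpos d unfolding c1_def by simp
  moreover have "c2 * (1 - \<beta>) = 1 - \<beta> + d" using b1 unfolding c2_def by simp
  ultimately have sum1: "c1 * \<beta> + c2 * (1 - \<beta>) = 1" by simp
  have K: "KL2r (\<beta> - d) \<beta> = (\<beta> - d) * ln c1 + (1 - \<beta> + d) * ln c2"
    unfolding KL2r_def c1_def c2_def by (simp add: algebra_simps)
  have s: "ln c2 - ln c1 \<le> c2 - c1"
  proof -
    have "ln c2 - ln c1 = ln (\<beta> / (\<beta> - d)) + ln ((1 - (\<beta> - d)) / (1 - \<beta>))"
      using bpos b1 c1p unfolding c1_def c2_def by (simp add: ln_div algebra_simps)
    also have "\<dots> \<le> (\<beta> - (\<beta> - d)) / (\<beta> * (1 - \<beta>))"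
      using bpos b1 d bd by (intro slope_ineq) auto
    also have "\<dots> = c2 - c1"
    proof -
      have "1 - \<beta> \<noteq> 0" "\<beta> \<noteq> 0" using bpos b1 d by auto
      then show ?thesis unfolding c1_def c2_def by (simp add: field_simps)
    qed
    finally show ?thesis .
  qed
  have "KL2r a b \<ge> a * ln c1 + a - c1 * b + ((1 - a) * ln c2 + (1 - a) - c2 * (1 - b))"
    using a bb d bpos c1p c2p by (intro tangent2) auto
  moreover have "a * ln c1 + a - c1 * b + ((1 - a) * ln c2 + (1 - a) - c2 * (1 - b))
      = a * (ln c1 - ln c2) + ln c2 + 1 - c1 * b - c2 * (1 - b)" by (simp add: algebra_simps)
  moreover have "a * (ln c1 - ln c2) \<ge> (b - d) * (ln c1 - ln c2)"
    using a lnle by (intro mult_right_mono_neg) auto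
  moreover have "(b - d) * (ln c1 - ln c2) + ln c2 + 1 - c1 * b - c2 * (1 - b)
      = KL2r (\<beta> - d) \<beta> + (b - \<beta>) * ((c2 - c1) - (ln c2 - ln c1))"
    unfolding K using sum1 by (simp add: algebra_simps)
  moreover have "(b - \<beta>) * ((c2 - c1) - (ln c2 - ln c1)) \<ge> 0"
    using bb s by simp
  ultimately show ?thesis by linarith
qed

lemma up1:
  assumes "0 < b" "b < 1" "0 < d" "b + d \<le> a" "a \<le> 1"
  shows "KL2r (b + d) b \<le> KL2r a b"
proof (cases "b + d = 1")
  case True then have "a = b + d" using assms by linarith
  then show ?thesis by simp
next
  case False
  then have bd: "b + d < 1" using assms by linarith
  define c1 where "c1 = (b + d) / b"
  define c2 where "c2 = (1 - b - d) / (1 - b)"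
  have c1p: "1 \<le> c1" using assms unfolding c1_def by (auto simp: field_simps)
  have c2p: "0 < c2" "c2 \<le> 1" using assms bd unfolding c2_def by (auto simp: field_simps)
  have lnle: "ln c2 \<le> ln c1" using c1p c2p by simp
  have sum1: "c1 * b + c2 * (1 - b) = 1" using assms bd unfolding c1_def c2_def by (simp add: field_simps)
  have K: "KL2r (b + d) b = (b + d) * ln c1 + (1 - b - d) * ln c2"
    unfolding KL2r_def c1_def c2_def by (simp add: algebra_simps)
  have "KL2r a b \<ge> a * ln c1 + a - c1 * b + ((1 - a) * ln c2 + (1 - a) - c2 * (1 - b))"
    using assms c1p c2p by (intro tangent2) auto
  moreover have "a * ln c1 + a - c1 * b + ((1 - a) * ln c2 + (1 - a) - c2 * (1 - b))
      = a * (ln c1 - ln c2) + ln c2" using sum1 by (simp add: algebra_simps)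
  moreover have "a * (ln c1 - ln c2) \<ge> (b + d) * (ln c1 - ln c2)"
    using assms lnle by (intro mult_right_mono) auto
  moreover have "(b + d) * (ln c1 - ln c2) + ln c2 = KL2r (b + d) b"
    unfolding K by (simp add: algebra_simps)
  ultimately show ?thesis by linarith
qed

lemma dxlnx:
  fixes f :: "real \<Rightarrow> real"
  assumes "DERIV f x :> k" "0 < f x"
  shows "DERIV (\<lambda>x. f x * ln (f x)) x :> k * (ln (f x) + 1)"
proof -
  have "DERIV (\<lambda>x. f x * ln (f x)) x :> k * ln (f x) + f x * (k / f x)"
    using assms by (auto intro!: derivative_eq_intros)
  moreover have "k * ln (f x) + f x * (k / f x) = k * (ln (f x) + 1)"
    using assms by (simp add: algebra_simps)
  ultimately show ?thesis by simp
qed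

lemma F_ineq:
  assumes b: "1/2 \<le> b" "b < 1" and t: "0 \<le> t" "t \<le> 1 - b"
  shows "KL2r (b - t) b \<le> KL2r (b + t) b"
proof -
  define G where "G = (\<lambda>s. ((b+s)*ln(b+s) - (b+s)*ln b + (1-b-s)*ln(1-b-s) - (1-b-s)*ln(1-b))
        - ((b-s)*ln(b-s) - (b-s)*ln b + (1-b+s)*ln(1-b+s) - (1-b+s)*ln(1-b)))"
  have G_eq: "G s = KL2r (b + s) b - KL2r (b - s) b" if "0 \<le> s" "s \<le> 1 - b" for s
  proof -
    have "(b+s) * ln ((b+s)/b) = (b+s)*ln(b+s) - (b+s)*ln b" using that b by (intro xln_div) auto
    moreover have "(1-(b+s)) * ln ((1-(b+s))/(1-b)) = (1-b-s)*ln(1-b-s) - (1-b-s)*ln(1-b)"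
      using xln_div[of "1-b-s" "1-b"] that b by (simp add: algebra_simps)
    moreover have "(b-s) * ln ((b-s)/b) = (b-s)*ln(b-s) - (b-s)*ln b" using that b by (intro xln_div) auto
    moreover have "(1-(b-s)) * ln ((1-(b-s))/(1-b)) = (1-b+s)*ln(1-b+s) - (1-b+s)*ln(1-b)"
      using xln_div[of "1-b+s" "1-b"] that b by (simp add: algebra_simps)
    ultimately show ?thesis unfolding G_def KL2r_def by simp
  qed
  have "G 0 \<le> G t"
  proof (rule DERIV_nonneg_imp_increasing_open[of 0 t G])
    show "0 \<le> t" by fact
    fix s :: real assume s: "0 < s" "s < t"
    have pos: "0 < b - s" "0 < 1 - b - s" "0 < b + s" "0 < 1 - b + s" "0 < b" "0 < 1 - b"
      using s t b by auto
    define y where "y = ln (b+s) + ln (b-s) - 2 * ln b - ln (1-b-s) - ln (1-b+s) + 2 * ln (1-b)"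
    show "\<exists>y. DERIV G s :> y \<and> y \<ge> 0"
    proof (intro exI conjI)
      have d1: "DERIV (\<lambda>s. (b+s)*ln(b+s)) s :> 1 * (ln (b+s) + 1)"
        by (rule dxlnx) (use pos in \<open>auto intro!: derivative_eq_intros\<close>)
      have d2: "DERIV (\<lambda>s. (1-b-s)*ln(1-b-s)) s :> (-1) * (ln (1-b-s) + 1)"
        by (rule dxlnx) (use pos in \<open>auto intro!: derivative_eq_intros\<close>)
      have d3: "DERIV (\<lambda>s. (b-s)*ln(b-s)) s :> (-1) * (ln (b-s) + 1)"
        by (rule dxlnx) (use pos in \<open>auto intro!: derivative_eq_intros\<close>)
      have d4: "DERIV (\<lambda>s. (1-b+s)*ln(1-b+s)) s :> 1 * (ln (1-b+s) + 1)"
        by (rule dxlnx) (use pos in \<open>auto intro!: derivative_eq_intros\<close>)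
      have l1: "DERIV (\<lambda>s. (b+s)*ln b) s :> ln b" by (auto intro!: derivative_eq_intros)
      have l2: "DERIV (\<lambda>s. (1-b-s)*ln (1-b)) s :> - ln (1-b)" by (auto intro!: derivative_eq_intros)
      have l3: "DERIV (\<lambda>s. (b-s)*ln b) s :> - ln b" by (auto intro!: derivative_eq_intros)
      have l4: "DERIV (\<lambda>s. (1-b+s)*ln (1-b)) s :> ln (1-b)" by (auto intro!: derivative_eq_intros)
      have "DERIV G s :> (1 * (ln (b+s) + 1) - ln b + (-1) * (ln (1-b-s) + 1) - - ln (1-b))
          - ((-1) * (ln (b-s) + 1) - - ln b + 1 * (ln (1-b+s) + 1) - ln (1-b))"
        unfolding G_def by (intro DERIV_diff DERIV_add d1 d2 d3 d4 l1 l2 l3 l4)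
      moreover have "(1 * (ln (b+s) + 1) - ln b + (-1) * (ln (1-b-s) + 1) - - ln (1-b))
          - ((-1) * (ln (b-s) + 1) - - ln b + 1 * (ln (1-b+s) + 1) - ln (1-b)) = y"
        unfolding y_def by simp
      ultimately show "DERIV G s :> y" by simp
      have l1: "ln (b+s) + ln (b-s) - 2 * ln b = ln ((b^2 - s^2) / (b^2))"
      proof -
        have "(b^2 - s^2) / (b^2) = ((b+s)*(b-s))/(b*b)" by (simp add: power2_eq_square algebra_simps)
        moreover have "ln (((b+s)*(b-s))/(b*b)) = ln (b+s) + ln (b-s) - (ln b + ln b)"
          using pos by (simp add: ln_div ln_mult)
        ultimately show ?thesis by simp
      qed
      have l2: "ln (1-b-s) + ln (1-b+s) - 2 * ln (1-b) = ln (((1-b)^2 - s^2) / ((1-b)^2))"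
      proof -
        have "((1-b)^2 - s^2) / ((1-b)^2) = ((1-b-s)*(1-b+s))/((1-b)*(1-b))" by (simp add: power2_eq_square algebra_simps)
        moreover have "ln (((1-b-s)*(1-b+s))/((1-b)*(1-b))) = ln (1-b-s) + ln (1-b+s) - (ln (1-b) + ln (1-b))"
          using pos by (simp add: ln_div ln_mult)
        ultimately show ?thesis by simp
      qed
      have sq: "(1-b)^2 \<le> b^2" using b pos by (intro power_mono) auto
      have q1: "((1-b)^2 - s^2) / ((1-b)^2) = 1 - s^2 / ((1-b)^2)"
        using pos by (simp add: field_simps)
      have q2: "(b^2 - s^2) / (b^2) = 1 - s^2 / (b^2)"
        using pos by (simp add: field_simps)
      have "s^2 / (b^2) \<le> s^2 / ((1-b)^2)"
        using sq pos by (intro divide_left_mono) auto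
      then have le: "((1-b)^2 - s^2) / ((1-b)^2) \<le> (b^2 - s^2) / (b^2)"
        unfolding q1 q2 by simp
      have pp: "0 < ((1-b)^2 - s^2) / ((1-b)^2)"
      proof -
        have "s^2 < (1-b)^2" using pos s t by (intro power_strict_mono) auto
        then show ?thesis using pos by simp
      qed
      have "ln (((1-b)^2 - s^2) / ((1-b)^2)) \<le> ln ((b^2 - s^2) / (b^2))"
        using le pp by simp
      then show "y \<ge> 0" unfolding y_def using l1 l2 by linarith
    qed
  next
    have c1: "continuous_on {0..t} (\<lambda>s. (1-b-s)*ln(1-b-s))"
      using t by (intro xlnx_cont_comp) (auto intro!: continuous_intros)
    have c2: "continuous_on {0..t} (\<lambda>s. (b+s)*ln(b+s))"
      using t b by (intro xlnx_cont_comp) (auto intro!: continuous_intros)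
    have c3: "continuous_on {0..t} (\<lambda>s. (b-s)*ln(b-s))"
      using t b by (intro xlnx_cont_comp) (auto intro!: continuous_intros)
    have c4: "continuous_on {0..t} (\<lambda>s. (1-b+s)*ln(1-b+s))"
      using t b by (intro xlnx_cont_comp) (auto intro!: continuous_intros)
    show "continuous_on {0..t} G"
    proof -
      have c5: "continuous_on {0..t} (\<lambda>s. (b+s)*ln b)" by (intro continuous_intros)
      have c6: "continuous_on {0..t} (\<lambda>s. (1-b-s)*ln (1-b))" by (intro continuous_intros)
      have c7: "continuous_on {0..t} (\<lambda>s. (b-s)*ln b)" by (intro continuous_intros)
      have c8: "continuous_on {0..t} (\<lambda>s. (1-b+s)*ln (1-b))" by (intro continuous_intros)
      show ?thesis unfolding G_def by (intro continuous_on_diff continuous_on_add c1 c2 c3 c4 c5 c6 c7 c8)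
    qed
  qed
  moreover have "G 0 = 0" unfolding G_def by simp
  ultimately show ?thesis using G_eq[OF t] by simp
qed

lemma KL2r_sym: "KL2r a b = KL2r (1 - a) (1 - b)"
  unfolding KL2r_def by (simp add: algebra_simps)

lemma R_main:
  assumes d: "0 < d" and bd: "1 - \<beta> < \<beta> - d" and b1: "\<beta> \<le> 1"
    and a: "0 \<le> a" "a \<le> 1" and b: "0 < b" "b < 1"
    and rng: "\<beta> \<le> b \<or> \<beta> \<le> 1 - b" and dist: "d \<le> \<bar>a - b\<bar>"
  shows "\<beta> < 1 \<and> KL2r (\<beta> - d) \<beta> \<le> KL2r a b"
proof -
  have bl1: "\<beta> < 1" using rng b by linarith
  have gen: "KL2r (\<beta> - d) \<beta> \<le> KL2r a' b'"
    if a': "0 \<le> a'" "a' \<le> 1" and b': "\<beta> \<le> b'" "b' < 1" and dd: "d \<le> \<bar>a' - b'\<bar>" for a' b'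
  proof (cases "a' \<le> b' - d")
    case True
    then show ?thesis using d bd bl1 b' a' by (intro down_case) auto
  next
    case False
    then have up: "b' + d \<le> a'" using dd by (auto simp: abs_if split: if_splits)
    have h1: "KL2r (b' + d) b' \<le> KL2r a' b'" using up a' b' bd d by (intro up1) auto
    have h2: "KL2r (b' - d) b' \<le> KL2r (b' + d) b'" using up a' b' bd d by (intro F_ineq) auto
    have h3: "KL2r (\<beta> - d) \<beta> \<le> KL2r (b' - d) b'" using d bd bl1 b' by (intro down_case) auto
    show ?thesis using h1 h2 h3 by linarith
  qed
  show ?thesis
  proof (cases "\<beta> \<le> b")
    case True then show ?thesis using gen[of a b] a b dist bl1 by auto
  next
    case False
    then have "\<beta> \<le> 1 - b" using rng by auto
    then have "KL2r (\<beta> - d) \<beta> \<le> KL2r (1 - a) (1 - b)" using gen[of "1-a" "1-b"] a b dist by auto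
    then show ?thesis using bl1 KL2r_sym[of a b] by simp
  qed
qed




lemma dens_meas[measurable]: "dens M P \<in> borel_measurable M"
  unfolding dens_def by measurable

lemma dens_measure:
  assumes sf: "sigma_finite_measure \<mu>" and P: "P \<in> probs \<mu>" and A: "A \<in> sets \<mu>"
  shows "measure P A = (\<integral>x. dens \<mu> P x * indicator A x \<partial>\<mu>)"
    and "integrable \<mu> (\<lambda>x. dens \<mu> P x * indicator A x)"
proof -
  interpret sigma_finite_measure \<mu> by fact
  from P have ps: "prob_space P" "sets P = sets \<mu>" "absolutely_continuous \<mu> P" by (auto simp: probs_def)
  interpret P: prob_space P by fact
  have sfP: "sigma_finite_measure P" by (rule P.sigma_finite_measure_axioms)
  have AP: "A \<in> sets P" using A ps by simp
  have iP: "integrable P (indicator A :: 'a \<Rightarrow> real)" using AP P.emeasure_finite[of A] by (intro integrable_real_indicator) (auto simp: less_top[symmetric])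
  have m: "(indicator A :: 'a \<Rightarrow> real) \<in> borel_measurable \<mu>" using A by measurable
  show "integrable \<mu> (\<lambda>x. dens \<mu> P x * indicator A x)"
    using RN_deriv_integrable[OF sfP ps(3) ps(2) m] iP unfolding dens_def by simp
  have "measure P A = integral\<^sup>L P (indicator A)"
    using AP by (simp add: sets.Int_space_eq2)
  also have "\<dots> = (\<integral>x. dens \<mu> P x * indicator A x \<partial>\<mu>)"
    using RN_deriv_integral[OF sfP ps(3) ps(2) m] unfolding dens_def by simp
  finally show "measure P A = (\<integral>x. dens \<mu> P x * indicator A x \<partial>\<mu>)" .
qed

lemma TV_formula:
  assumes sf: "sigma_finite_measure \<mu>" and P: "P \<in> probs \<mu>" and Q: "Q \<in> probs \<mu>"
  defines "A \<equiv> {x \<in> space \<mu>. dens \<mu> Q x < dens \<mu> P x}"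
  shows "TV \<mu> P Q = 2 * (measure P A - measure Q A)" and "A \<in> sets \<mu>"
proof -
  show A: "A \<in> sets \<mu>" unfolding A_def by measurable
  have S: "space \<mu> \<in> sets \<mu>" by simp
  note a1 = dens_measure[OF sf P A] and a2 = dens_measure[OF sf Q A]
    and s1 = dens_measure[OF sf P S] and s2 = dens_measure[OF sf Q S]
  have PS: "measure P (space \<mu>) = 1" "measure Q (space \<mu>) = 1"
  proof -
    from P have "prob_space P" "sets P = sets \<mu>" by (auto simp: probs_def)
    then show "measure P (space \<mu>) = 1" using sets_eq_imp_space_eq[of P \<mu>] prob_space.prob_space[of P] by simp
    from Q have "prob_space Q" "sets Q = sets \<mu>" by (auto simp: probs_def)
    then show "measure Q (space \<mu>) = 1" using sets_eq_imp_space_eq[of Q \<mu>] prob_space.prob_space[of Q] by simp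
  qed
  define p where "p = dens \<mu> P"
  define q where "q = dens \<mu> Q"
  have pt: "\<bar>p x - q x\<bar> = 2 * (p x * indicator A x - q x * indicator A x)
      - (p x * indicator (space \<mu>) x - q x * indicator (space \<mu>) x)" if x: "x \<in> space \<mu>" for x
  proof (cases "q x < p x")
    case True
    then have "x \<in> A" using x unfolding A_def p_def q_def by simp
    then show ?thesis using x True by simp
  next
    case False
    then have "x \<notin> A" using x unfolding A_def p_def q_def by simp
    then show ?thesis using x False by simp
  qed
  have "TV \<mu> P Q = (\<integral>x. 2 * (p x * indicator A x - q x * indicator A x)
      - (p x * indicator (space \<mu>) x - q x * indicator (space \<mu>) x) \<partial>\<mu>)"
    unfolding TV_def p_def[symmetric] q_def[symmetric]
    by (rule Bochner_Integration.integral_cong[OF refl]) (rule pt)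
  also have "\<dots> = 2 * ((\<integral>x. p x * indicator A x \<partial>\<mu>) - (\<integral>x. q x * indicator A x \<partial>\<mu>))
     - ((\<integral>x. p x * indicator (space \<mu>) x \<partial>\<mu>) - (\<integral>x. q x * indicator (space \<mu>) x \<partial>\<mu>))"
  proof -
    have i1: "integrable \<mu> (\<lambda>x. p x * indicator A x)" using a1(2) unfolding p_def .
    have i2: "integrable \<mu> (\<lambda>x. q x * indicator A x)" using a2(2) unfolding q_def .
    have i3: "integrable \<mu> (\<lambda>x. p x * indicator (space \<mu>) x)" using s1(2) unfolding p_def .
    have i4: "integrable \<mu> (\<lambda>x. q x * indicator (space \<mu>) x)" using s2(2) unfolding q_def .
    have j1: "integrable \<mu> (\<lambda>x. 2 * (p x * indicator A x - q x * indicator A x))"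
      using i1 i2 by (intro integrable_mult_right Bochner_Integration.integrable_diff)
    have j2: "integrable \<mu> (\<lambda>x. p x * indicator (space \<mu>) x - q x * indicator (space \<mu>) x)"
      using i3 i4 by (intro Bochner_Integration.integrable_diff)
    show ?thesis
      by (simp only: Bochner_Integration.integral_diff[OF j1 j2] integral_mult_right_zero
        Bochner_Integration.integral_diff[OF i1 i2] Bochner_Integration.integral_diff[OF i3 i4])
  qed
  also have "\<dots> = 2 * (measure P A - measure Q A) - (measure P (space \<mu>) - measure Q (space \<mu>))"
    using a1(1) a2(1) s1(1) s2(1) unfolding p_def q_def by simp
  also have "\<dots> = 2 * (measure P A - measure Q A)" using PS by simp
  finally show "TV \<mu> P Q = 2 * (measure P A - measure Q A)" .
qed

lemma ylny: fixes y c :: real assumes "0 \<le> y" "0 < c" shows "y * ln c + y - c \<le> y * ln y"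
  using tangent[of y 1 c] assms by simp

lemma dp_set:
  assumes Q: "prob_space Q" and P: "prob_space P" and ac: "absolutely_continuous Q P" and se: "sets P = sets Q"
    and int: "integrable P (\<lambda>x. ln (enn2real (RN_deriv Q P x)))" and S: "S \<in> sets Q"
  shows "measure P S * ln (measure P S / measure Q S) \<le> (\<integral>x. ln (enn2real (RN_deriv Q P x)) * indicator S x \<partial>P)"
proof -
  interpret Q: prob_space Q by fact
  interpret P: prob_space P by fact
  have sfP: "sigma_finite_measure P" by (rule P.sigma_finite_measure_axioms)
  define f where "f = (\<lambda>x. enn2real (RN_deriv Q P x))"
  have fm[measurable]: "f \<in> borel_measurable Q" unfolding f_def by measurable
  have f0: "\<And>x. 0 \<le> f x" unfolding f_def by simp
  have SP: "S \<in> sets P" using S se by simp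
  have gm: "(\<lambda>x. ln (f x) * indicator S x) \<in> borel_measurable Q" using S by measurable
  have im: "(indicator S :: 'a \<Rightarrow> real) \<in> borel_measurable Q" using S by measurable
  have intPS: "integrable P (\<lambda>x. ln (f x) * indicator S x)"
    using int SP unfolding f_def by (intro integrable_real_mult_indicator)
  have eqI: "(\<integral>x. ln (f x) * indicator S x \<partial>P) = (\<integral>x. f x * (ln (f x) * indicator S x) \<partial>Q)"
    using Q.RN_deriv_integral[OF sfP ac se gm] unfolding f_def .
  have intQ: "integrable Q (\<lambda>x. f x * (ln (f x) * indicator S x))"
    using Q.RN_deriv_integrable[OF sfP ac se gm] intPS unfolding f_def by simp
  have iPS: "integrable P (indicator S :: 'a \<Rightarrow> real)"
    using SP P.emeasure_finite[of S] by (intro integrable_real_indicator) (auto simp: less_top[symmetric])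
  have PSeq: "measure P S = (\<integral>x. f x * indicator S x \<partial>Q)"
  proof -
    have "measure P S = integral\<^sup>L P (indicator S)" using SP by (simp add: sets.Int_space_eq2)
    also have "\<dots> = (\<integral>x. f x * indicator S x \<partial>Q)"
      using Q.RN_deriv_integral[OF sfP ac se im] unfolding f_def .
    finally show ?thesis .
  qed
  have intf: "integrable Q (\<lambda>x. f x * indicator S x)"
    using Q.RN_deriv_integrable[OF sfP ac se im] iPS unfolding f_def by simp
  show ?thesis
  proof (cases "measure P S = 0")
    case True
    then have "S \<in> null_sets P" using SP by (simp add: P.emeasure_eq_measure null_sets_def)
    then have "AE x in P. ln (f x) * indicator S x = 0"
      by (rule eventually_mono[OF AE_not_in]) simp
    then have "(\<integral>x. ln (f x) * indicator S x \<partial>P) = 0" by (rule integral_eq_zero_AE)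
    then show ?thesis using True unfolding f_def by simp
  next
    case False
    then have PSp: "measure P S > 0" by (simp add: zero_less_measure_iff)
    have QSp: "measure Q S > 0"
    proof (rule ccontr)
      assume "\<not> measure Q S > 0"
      then have "emeasure Q S = 0" by (simp add: Q.emeasure_eq_measure zero_less_measure_iff)
      then have "emeasure P S = 0" using absolutely_continuousD[OF ac S] by simp
      then show False using False by (simp add: P.emeasure_eq_measure)
    qed
    define c where "c = measure P S / measure Q S"
    have cp: "c > 0" unfolding c_def using PSp QSp by simp
    have ic: "integrable Q (\<lambda>x. (ln c + 1) * (f x * indicator S x) - c * indicator S x)"
      using intf Q.emeasure_finite[of S] S
      by (intro Bochner_Integration.integrable_diff integrable_mult_right integrable_real_indicator)
         (auto simp: less_top[symmetric])
    have "(\<integral>x. (ln c + 1) * (f x * indicator S x) - c * indicator S x \<partial>Q)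
        \<le> (\<integral>x. f x * (ln (f x) * indicator S x) \<partial>Q)"
    proof (rule integral_mono[OF ic intQ])
      fix x
      show "(ln c + 1) * (f x * indicator S x) - c * indicator S x \<le> f x * (ln (f x) * indicator S x)"
        using ylny[OF f0 cp, of x] by (cases "x \<in> S") (simp_all add: algebra_simps)
    qed
    moreover have "(\<integral>x. (ln c + 1) * (f x * indicator S x) - c * indicator S x \<partial>Q)
        = (ln c + 1) * measure P S - c * measure Q S"
    proof -
      have i2: "integrable Q (\<lambda>x. c * indicator S x)"
        using Q.emeasure_finite[of S] S
        by (intro integrable_mult_right integrable_real_indicator) (auto simp: less_top[symmetric])
      have i1: "integrable Q (\<lambda>x. (ln c + 1) * (f x * indicator S x))"
        using intf by (intro integrable_mult_right)
      show ?thesis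
        by (simp only: Bochner_Integration.integral_diff[OF i1 i2] integral_mult_right_zero PSeq)
           (simp add: S sets.Int_space_eq2)
    qed
    moreover have "(ln c + 1) * measure P S - c * measure Q S = measure P S * ln c"
      unfolding c_def using QSp by (simp add: algebra_simps)
    ultimately show ?thesis using eqI unfolding c_def f_def by simp
  qed
qed

lemma KL_lower:
  assumes Q: "prob_space Q" and P: "prob_space P" and ac: "absolutely_continuous Q P" and se: "sets P = sets Q"
    and int: "integrable P (\<lambda>x. ln (enn2real (RN_deriv Q P x)))" and S: "S \<in> sets Q"
  shows "KL2r (measure P S) (measure Q S) \<le> (\<integral>x. ln (enn2real (RN_deriv Q P x)) \<partial>P)"
proof -
  interpret Q: prob_space Q by fact
  interpret P: prob_space P by fact
  define g where "g = (\<lambda>x. ln (enn2real (RN_deriv Q P x)))"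
  have sp: "space P = space Q" using se by (rule sets_eq_imp_space_eq)
  have S': "space Q - S \<in> sets Q" using S by auto
  have SP: "S \<in> sets P" "space Q - S \<in> sets P" using S S' se by auto
  have i1: "integrable P (\<lambda>x. g x * indicator S x)" using int SP unfolding g_def
    by (intro integrable_real_mult_indicator)
  have i2: "integrable P (\<lambda>x. g x * indicator (space Q - S) x)" using int SP unfolding g_def
    by (intro integrable_real_mult_indicator)
  have "(\<integral>x. g x \<partial>P) = (\<integral>x. g x * indicator S x + g x * indicator (space Q - S) x \<partial>P)"
    by (rule Bochner_Integration.integral_cong[OF refl]) (auto simp: sp indicator_def)
  also have "\<dots> = (\<integral>x. g x * indicator S x \<partial>P) + (\<integral>x. g x * indicator (space Q - S) x \<partial>P)"
    by (rule Bochner_Integration.integral_add[OF i1 i2])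
  finally have split: "(\<integral>x. g x \<partial>P) = (\<integral>x. g x * indicator S x \<partial>P) + (\<integral>x. g x * indicator (space Q - S) x \<partial>P)" .
  have d1: "measure P S * ln (measure P S / measure Q S) \<le> (\<integral>x. g x * indicator S x \<partial>P)"
    using dp_set[OF Q P ac se int S] unfolding g_def .
  have d2: "measure P (space Q - S) * ln (measure P (space Q - S) / measure Q (space Q - S)) \<le> (\<integral>x. g x * indicator (space Q - S) x \<partial>P)"
    using dp_set[OF Q P ac se int S'] unfolding g_def .
  have c1: "measure P (space Q - S) = 1 - measure P S" using P.prob_compl[of S] SP sp by simp
  have c2: "measure Q (space Q - S) = 1 - measure Q S" using Q.prob_compl[of S] S by simp
  show ?thesis unfolding KL2r_def using split d1 d2 c1 c2 unfolding g_def by simp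
qed

lemma KL2_eq:
  assumes "0 < a" "a < 1" "0 < b" "b < 1"
  shows "KL2 a b = ereal (KL2r a b)"
  using assms unfolding KL2_def KL2r_def xlog_term_def by simp

lemma balance_facts:
  assumes Q: "prob_space Q"
  shows "balance_coeff Q \<le> 1"
    and "\<And>x. x \<in> range_meas Q \<Longrightarrow> 1/2 \<le> x \<Longrightarrow> balance_coeff Q \<le> x"
proof -
  interpret Q: prob_space Q by fact
  have bdd: "bdd_below {x \<in> range_meas Q. x \<ge> 1/2}" by (rule bdd_belowI[of _ "1/2"]) auto
  show "\<And>x. x \<in> range_meas Q \<Longrightarrow> 1/2 \<le> x \<Longrightarrow> balance_coeff Q \<le> x"
    unfolding balance_coeff_def using bdd by (intro cInf_lower) auto
  have "1 \<in> range_meas Q" unfolding range_meas_def using Q.prob_space by force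
  then show "balance_coeff Q \<le> 1"
    unfolding balance_coeff_def using bdd by (intro cInf_lower) auto
qed

lemma lower_bound:
  assumes sf: "sigma_finite_measure \<mu>" and Q: "Q \<in> probs \<mu>" and P: "P \<in> probs \<mu>"
    and bh: "1/2 < balance_coeff Q" and v: "0 < v" "v < 4 * (balance_coeff Q - 1/2)"
    and tv: "v \<le> TV \<mu> P Q"
  shows "KL2 (balance_coeff Q - v/2) (balance_coeff Q) \<le> KL_div P Q"
proof (cases "KL_div P Q = \<infinity>")
  case True then show ?thesis by simp
next
  case False
  define \<beta> where "\<beta> = balance_coeff Q"
  define d where "d = v / 2"
  from Q have Qs: "prob_space Q" "sets Q = sets \<mu>" "absolutely_continuous \<mu> Q" by (auto simp: probs_def)
  from P have Ps: "prob_space P" "sets P = sets \<mu>" "absolutely_continuous \<mu> P" by (auto simp: probs_def)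
  interpret Q: prob_space Q by (rule Qs(1))
  interpret P: prob_space P by (rule Ps(1))
  have ac: "absolutely_continuous Q P" and se: "sets P = sets Q"
    and int: "integrable P (\<lambda>x. ln (enn2real (RN_deriv Q P x)))"
    and KLe: "KL_div P Q = ereal (\<integral>x. ln (enn2real (RN_deriv Q P x)) \<partial>P)"
    using False unfolding KL_div_def by (auto split: if_splits)
  define A where "A = {x \<in> space \<mu>. dens \<mu> Q x < dens \<mu> P x}"
  have TVe: "TV \<mu> P Q = 2 * (measure P A - measure Q A)" and A\<mu>: "A \<in> sets \<mu>"
    using TV_formula[OF sf P Q] unfolding A_def by auto
  have AQ: "A \<in> sets Q" using A\<mu> Qs by simp
  have AP: "A \<in> sets P" using A\<mu> Ps by simp
  have spQ: "space Q = space \<mu>" using Qs(2) by (rule sets_eq_imp_space_eq)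
  have spP: "space P = space \<mu>" using Ps(2) by (rule sets_eq_imp_space_eq)
  define a where "a = measure P A"
  define b where "b = measure Q A"
  have dist: "d \<le> a - b" using tv TVe unfolding a_def b_def d_def by simp
  have d0: "0 < d" using v unfolding d_def by simp
  have a01: "0 \<le> a" "a \<le> 1" unfolding a_def by auto
  have b0: "0 < b"
  proof (rule ccontr)
    assume "\<not> 0 < b"
    then have "emeasure Q A = 0" unfolding b_def by (simp add: Q.emeasure_eq_measure zero_less_measure_iff)
    then have "emeasure P A = 0" using absolutely_continuousD[OF ac AQ] by simp
    then have "a = 0" unfolding a_def by (simp add: P.emeasure_eq_measure)
    then show False using dist d0 \<open>\<not> 0 < b\<close> measure_nonneg[of Q A] unfolding b_def by simp
  qed
  have b1: "b < 1"
  proof (rule ccontr)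
    assume "\<not> b < 1"
    then have "b = 1" unfolding b_def using Q.prob_le_1[of A] by simp
    then have "measure Q (space Q - A) = 0" using Q.prob_compl[of A] AQ unfolding b_def by simp
    then have "emeasure Q (space Q - A) = 0" by (simp add: Q.emeasure_eq_measure)
    then have "emeasure P (space Q - A) = 0" using absolutely_continuousD[OF ac] AQ by auto
    then have "measure P (space P - A) = 0" using spP spQ by (simp add: P.emeasure_eq_measure)
    then have "a = 1" using P.prob_compl[of A] AP unfolding a_def by simp
    then show False using dist d0 \<open>b = 1\<close> by simp
  qed
  have rb: "b \<in> range_meas Q" unfolding range_meas_def b_def using AQ by auto
  have rb': "1 - b \<in> range_meas Q"
  proof -
    have "1 - b = measure Q (space Q - A)" using Q.prob_compl[of A] AQ unfolding b_def by simp
    moreover have "space Q - A \<in> sets Q" using AQ by auto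
    ultimately show ?thesis unfolding range_meas_def by auto
  qed
  have rng: "\<beta> \<le> b \<or> \<beta> \<le> 1 - b"
  proof (cases "1/2 \<le> b")
    case True then show ?thesis using balance_facts(2)[OF Qs(1) rb] unfolding \<beta>_def by simp
  next
    case False then show ?thesis using balance_facts(2)[OF Qs(1) rb'] unfolding \<beta>_def by simp
  qed
  have bd: "1 - \<beta> < \<beta> - d" using v unfolding \<beta>_def d_def by simp
  have R: "\<beta> < 1 \<and> KL2r (\<beta> - d) \<beta> \<le> KL2r a b"
    using R_main[OF d0 bd balance_facts(1)[OF Qs(1), folded \<beta>_def] a01 b0 b1 rng] dist by simp
  have KL: "KL2r a b \<le> (\<integral>x. ln (enn2real (RN_deriv Q P x)) \<partial>P)"
    unfolding a_def b_def by (rule KL_lower[OF Qs(1) Ps(1) ac se int AQ])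
  have "KL2 (\<beta> - d) \<beta> = ereal (KL2r (\<beta> - d) \<beta>)"
    using R bd bh d0 unfolding \<beta>_def by (intro KL2_eq) auto
  then show ?thesis using R KL KLe unfolding \<beta>_def d_def by simp
qed

lemma two_val:
  fixes \<alpha> \<gamma> :: real
  assumes Q: "prob_space Q" and B: "B \<in> sets Q"
  shows "integrable Q (\<lambda>y. if y \<in> B then \<alpha> else \<gamma>)"
    and "(\<integral>y. (if y \<in> B then \<alpha> else \<gamma>) \<partial>Q) = \<alpha> * measure Q B + \<gamma> * (1 - measure Q B)"
proof -
  interpret Q: prob_space Q by fact
  have B': "space Q - B \<in> sets Q" using B by auto
  have eq: "\<And>y. y \<in> space Q \<Longrightarrow> (if y \<in> B then \<alpha> else \<gamma>) = \<alpha> * indicator B y + \<gamma> * indicator (space Q - B) y"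
    by (auto simp: indicator_def)
  have i1: "integrable Q (\<lambda>y. \<alpha> * indicator B y)"
    using B Q.emeasure_finite[of B] by (intro integrable_mult_right integrable_real_indicator) (auto simp: less_top[symmetric])
  have i2: "integrable Q (\<lambda>y. \<gamma> * indicator (space Q - B) y)"
    using B' Q.emeasure_finite[of "space Q - B"] by (intro integrable_mult_right integrable_real_indicator) (auto simp: less_top[symmetric])
  have i: "integrable Q (\<lambda>y. \<alpha> * indicator B y + \<gamma> * indicator (space Q - B) y)"
    using i1 i2 by (rule Bochner_Integration.integrable_add)
  show "integrable Q (\<lambda>y. if y \<in> B then \<alpha> else \<gamma>)"
    using i by (subst Bochner_Integration.integrable_cong[OF refl eq]) auto
  have "(\<integral>y. (if y \<in> B then \<alpha> else \<gamma>) \<partial>Q) = (\<integral>y. \<alpha> * indicator B y + \<gamma> * indicator (space Q - B) y \<partial>Q)"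
    by (rule Bochner_Integration.integral_cong[OF refl eq])
  also have "\<dots> = \<alpha> * measure Q B + \<gamma> * measure Q (space Q - B)"
    by (simp only: Bochner_Integration.integral_add[OF i1 i2] integral_mult_right_zero integral_indicator)
       (simp add: B sets.Int_space_eq2 Int_absorb2 Diff_subset)
  also have "\<dots> = \<alpha> * measure Q B + \<gamma> * (1 - measure Q B)" using Q.prob_compl[of B] B by simp
  finally show "(\<integral>y. (if y \<in> B then \<alpha> else \<gamma>) \<partial>Q) = \<alpha> * measure Q B + \<gamma> * (1 - measure Q B)" .
qed

lemma construct:
  assumes sf: "sigma_finite_measure \<mu>" and Q: "Q \<in> probs \<mu>" and B: "B \<in> sets \<mu>"
    and x: "measure Q B = x" "0 < x - d" "x < 1" "0 < d"
  shows "\<exists>P\<in>probs \<mu>. TV \<mu> P Q = 2 * d \<and> KL_div P Q = ereal (KL2r (x - d) x)"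
proof -
  interpret sigma_finite_measure \<mu> by fact
  from Q have Qs: "prob_space Q" "sets Q = sets \<mu>" "absolutely_continuous \<mu> Q" by (auto simp: probs_def)
  interpret Q: prob_space Q by (rule Qs(1))
  have BQ[measurable]: "B \<in> sets Q" using B Qs by simp
  have spQ: "space Q = space \<mu>" using Qs(2) by (rule sets_eq_imp_space_eq)
  define c1 where "c1 = (x - d) / x"
  define c2 where "c2 = (1 - (x - d)) / (1 - x)"
  have c1p: "0 < c1" using x unfolding c1_def by simp
  have c2p: "0 < c2" using x unfolding c2_def by simp
  define w where "w = (\<lambda>y. if y \<in> B then c1 else c2)"
  have w0: "\<And>y. 0 < w y" unfolding w_def using c1p c2p by simp
  have wmQ[measurable]: "w \<in> borel_measurable Q" unfolding w_def by measurable
  have wm\<mu>[measurable]: "w \<in> borel_measurable \<mu>" using B unfolding w_def by measurable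
  define P where "P = density Q (\<lambda>y. ennreal (w y))"
  have sP: "sets P = sets Q" unfolding P_def by simp
  have spP: "space P = space Q" unfolding P_def by simp
  have BP: "B \<in> sets P" using sP by simp
  have intP: "\<And>f. f \<in> borel_measurable Q \<Longrightarrow> integral\<^sup>L P f = (\<integral>y. w y * f y \<partial>Q)"
    unfolding P_def using w0 by (subst integral_density) (auto intro: less_imp_le)
  have xc: "c1 * x = x - d" "c2 * (1 - x) = 1 - (x - d)" using x unfolding c1_def c2_def by auto
  have intw: "(\<integral>y. w y \<partial>Q) = 1"
    unfolding w_def using two_val(2)[OF Qs(1) BQ, of c1 c2] x xc by (simp add: algebra_simps)
  have iw: "integrable Q w" unfolding w_def by (rule two_val(1)[OF Qs(1) BQ])
  have "emeasure P (space P) = (\<integral>\<^sup>+ y. ennreal (w y) * indicator (space Q) y \<partial>Q)"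
    unfolding P_def by (simp add: emeasure_density)
  also have "\<dots> = (\<integral>\<^sup>+ y. ennreal (w y) \<partial>Q)"
    by (rule nn_integral_cong) (simp add: indicator_def)
  also have "\<dots> = ennreal (\<integral>y. w y \<partial>Q)"
    using iw w0 by (intro nn_integral_eq_integral) (auto intro: less_imp_le)
  finally have "emeasure P (space P) = 1" using intw by simp
  then have PP: "prob_space P" by (rule prob_spaceI)
  interpret P: prob_space P by (rule PP)
  have acQP: "absolutely_continuous Q P" unfolding P_def by (intro absolutely_continuousI_density) measurable
  have ac\<mu>P: "absolutely_continuous \<mu> P"
    using Qs(3) acQP unfolding absolutely_continuous_def by blast
  have Pin: "P \<in> probs \<mu>" unfolding probs_def using PP sP Qs(2) ac\<mu>P by simp
  have PB: "measure P B = x - d"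
  proof -
    have "measure P B = integral\<^sup>L P (indicator B)" using BP by (simp add: sets.Int_space_eq2)
    also have "\<dots> = (\<integral>y. w y * indicator B y \<partial>Q)" by (rule intP) measurable
    also have "\<dots> = (\<integral>y. (if y \<in> B then c1 else 0) \<partial>Q)"
      by (rule Bochner_Integration.integral_cong[OF refl]) (simp add: w_def indicator_def)
    also have "\<dots> = x - d" using two_val(2)[OF Qs(1) BQ, of c1 0] x xc by simp
    finally show ?thesis .
  qed
  have RN: "AE y in Q. ennreal (w y) = RN_deriv Q P y"
    unfolding P_def by (rule Q.RN_deriv_unique) auto
  have RNP: "AE y in P. ln (enn2real (RN_deriv Q P y)) = (if y \<in> B then ln c1 else ln c2)"
  proof -
    have "AE y in P. ennreal (w y) = RN_deriv Q P y" using absolutely_continuous_AE[OF sP acQP RN] .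
    then show ?thesis
    proof (rule eventually_mono)
      fix y assume h: "ennreal (w y) = RN_deriv Q P y"
      have "enn2real (RN_deriv Q P y) = w y" unfolding h[symmetric] using w0[of y] by simp
      then show "ln (enn2real (RN_deriv Q P y)) = (if y \<in> B then ln c1 else ln c2)"
        by (simp add: w_def)
    qed
  qed
  have iP: "integrable P (\<lambda>y. if y \<in> B then ln c1 else ln c2)" by (rule two_val(1)[OF PP BP])
  have m1: "(\<lambda>y. ln (enn2real (RN_deriv Q P y))) \<in> borel_measurable P"
    unfolding measurable_cong_sets[OF sP refl] by measurable
  have m2: "(\<lambda>y. if y \<in> B then ln c1 else ln c2) \<in> borel_measurable P"
    unfolding measurable_cong_sets[OF sP refl] by measurable
  have iKL: "integrable P (\<lambda>y. ln (enn2real (RN_deriv Q P y)))"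
    using integrable_cong_AE[OF m1 m2 RNP] iP by simp
  have vKL: "(\<integral>y. ln (enn2real (RN_deriv Q P y)) \<partial>P) = KL2r (x - d) x"
  proof -
    have "(\<integral>y. ln (enn2real (RN_deriv Q P y)) \<partial>P) = (\<integral>y. (if y \<in> B then ln c1 else ln c2) \<partial>P)"
      by (rule integral_cong_AE[OF m1 m2 RNP])
    also have "\<dots> = ln c1 * (x - d) + ln c2 * (1 - (x - d))" using two_val(2)[OF PP BP] PB by simp
    also have "\<dots> = KL2r (x - d) x" unfolding KL2r_def c1_def c2_def by (simp add: algebra_simps)
    finally show ?thesis .
  qed
  have KLv: "KL_div P Q = ereal (KL2r (x - d) x)"
    unfolding KL_div_def using acQP sP iKL vKL by simp
  have dQ: "density \<mu> (RN_deriv \<mu> Q) = Q" by (rule density_RN_deriv[OF Qs(3) Qs(2)])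
  have Pd: "P = density \<mu> (\<lambda>y. RN_deriv \<mu> Q y * ennreal (w y))"
  proof -
    have "P = density (density \<mu> (RN_deriv \<mu> Q)) (\<lambda>y. ennreal (w y))" by (simp only: P_def dQ)
    also have "\<dots> = density \<mu> (\<lambda>y. RN_deriv \<mu> Q y * ennreal (w y))"
      by (rule density_density_eq) measurable
    finally show ?thesis .
  qed
  have RN2: "AE y in \<mu>. RN_deriv \<mu> Q y * ennreal (w y) = RN_deriv \<mu> P y"
    by (rule RN_deriv_unique) (measurable, rule Pd[symmetric])
  have dP: "AE y in \<mu>. \<bar>dens \<mu> P y - dens \<mu> Q y\<bar> = dens \<mu> Q y * \<bar>w y - 1\<bar>"
  proof (rule eventually_mono[OF RN2])
    fix y assume "RN_deriv \<mu> Q y * ennreal (w y) = RN_deriv \<mu> P y"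
    then have "dens \<mu> P y = dens \<mu> Q y * w y"
    proof -
      have "dens \<mu> P y = enn2real (RN_deriv \<mu> Q y * ennreal (w y))"
        unfolding dens_def by (simp add: \<open>RN_deriv \<mu> Q y * ennreal (w y) = RN_deriv \<mu> P y\<close>)
      also have "\<dots> = enn2real (RN_deriv \<mu> Q y) * w y" using w0[of y] by (simp add: enn2real_mult)
      finally show ?thesis unfolding dens_def .
    qed
    moreover have "0 \<le> dens \<mu> Q y" unfolding dens_def by simp
    ultimately have h: "dens \<mu> P y = dens \<mu> Q y * w y" "0 \<le> dens \<mu> Q y" by simp_all
    have eq: "dens \<mu> Q y * w y - dens \<mu> Q y = dens \<mu> Q y * (w y - 1)" by (simp add: algebra_simps)
    show "\<bar>dens \<mu> P y - dens \<mu> Q y\<bar> = dens \<mu> Q y * \<bar>w y - 1\<bar>"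
      unfolding h(1) eq abs_mult using h(2) by simp
  qed
  have sfQ: "sigma_finite_measure Q" by (rule Q.sigma_finite_measure_axioms)
  have "TV \<mu> P Q = (\<integral>y. dens \<mu> Q y * \<bar>w y - 1\<bar> \<partial>\<mu>)"
  proof -
    have m3: "(\<lambda>y. \<bar>dens \<mu> P y - dens \<mu> Q y\<bar>) \<in> borel_measurable \<mu>" by measurable
    have m4: "(\<lambda>y. dens \<mu> Q y * \<bar>w y - 1\<bar>) \<in> borel_measurable \<mu>" by measurable
    show ?thesis unfolding TV_def by (rule integral_cong_AE[OF m3 m4 dP])
  qed
  also have "\<dots> = (\<integral>y. \<bar>w y - 1\<bar> \<partial>Q)"
    using RN_deriv_integral[OF sfQ Qs(3) Qs(2), of "\<lambda>y. \<bar>w y - 1\<bar>"] unfolding dens_def by simp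
  also have "\<dots> = (\<integral>y. (if y \<in> B then 1 - c1 else c2 - 1) \<partial>Q)"
  proof (rule Bochner_Integration.integral_cong[OF refl])
    fix y
    have "c1 \<le> 1" using x unfolding c1_def by (simp add: field_simps)
    moreover have "1 \<le> c2" using x unfolding c2_def by (simp add: field_simps)
    ultimately show "\<bar>w y - 1\<bar> = (if y \<in> B then 1 - c1 else c2 - 1)" unfolding w_def by auto
  qed
  also have "\<dots> = (1 - c1) * x + (c2 - 1) * (1 - x)" using two_val(2)[OF Qs(1) BQ] x by simp
  also have "\<dots> = 2 * d" using xc by (simp add: algebra_simps)
  finally have "TV \<mu> P Q = 2 * d" .
  then show ?thesis using Pin KLv by blast
qed

theorem theorem1:
  fixes \<mu> Q :: "'a measure" and v :: real
  assumes "sigma_finite_measure \<mu>"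
    and "Q \<in> probs \<mu>"
    and "balance_coeff Q > 1/2"
    and "0 < v" and "v < 4 * (balance_coeff Q - 1/2)"
  shows "Dstar \<mu> v Q = KL2 (balance_coeff Q - v/2) (balance_coeff Q)"
proof -
  note sf = assms(1) and Q = assms(2) and bh = assms(3) and v = assms(4,5)
  define \<beta> where "\<beta> = balance_coeff Q"
  define d where "d = v / 2"
  from Q have Qs: "prob_space Q" "sets Q = sets \<mu>" "absolutely_continuous \<mu> Q" by (auto simp: probs_def)
  interpret Q: prob_space Q by (rule Qs(1))
  have b1: "\<beta> \<le> 1" unfolding \<beta>_def by (rule balance_facts(1)[OF Qs(1)])
  have d0: "0 < d" using v unfolding d_def by simp
  have bd: "0 < \<beta> - d" "1 - \<beta> < \<beta> - d" using v bh b1 unfolding \<beta>_def d_def by simp_all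
  have lower: "KL2 (\<beta> - d) \<beta> \<le> Dstar \<mu> v Q"
    unfolding Dstar_def
  proof (rule Inf_greatest)
    fix k assume "k \<in> {KL_div P Q |P. P \<in> probs \<mu> \<and> v \<le> TV \<mu> P Q}"
    then obtain P where P: "P \<in> probs \<mu>" "v \<le> TV \<mu> P Q" and k: "k = KL_div P Q" by blast
    show "KL2 (\<beta> - d) \<beta> \<le> k"
      unfolding k \<beta>_def d_def by (rule lower_bound[OF sf Q P(1) bh v P(2)])
  qed
  have upper: "Dstar \<mu> v Q \<le> KL2 (\<beta> - d) \<beta>"
  proof (cases "\<beta> = 1")
    case True
    have "KL2 (\<beta> - d) \<beta> = \<infinity>"
      unfolding KL2_def xlog_term_def using True d0 bd by simp
    then show ?thesis by simp
  next
    case False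
    then have bl1: "\<beta> < 1" using b1 by simp
    define g where "g = (\<lambda>x. KL2r (x - d) x)"
    have pt: "Dstar \<mu> v Q \<le> ereal (g x)" if x: "x \<in> range_meas Q" "1/2 \<le> x" "x < 1" for x
    proof -
      have xb: "\<beta> \<le> x" unfolding \<beta>_def by (rule balance_facts(2)[OF Qs(1) x(1,2)])
      from x(1) obtain B where B: "B \<in> sets Q" "x = measure Q B" unfolding range_meas_def by blast
      have "\<exists>P\<in>probs \<mu>. TV \<mu> P Q = 2 * d \<and> KL_div P Q = ereal (KL2r (x - d) x)"
        using B xb bd x d0 Qs(2) by (intro construct[OF sf Q]) auto
      then obtain P where P: "P \<in> probs \<mu>" "TV \<mu> P Q = 2 * d" "KL_div P Q = ereal (KL2r (x - d) x)"
        by blast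
      have "KL_div P Q \<in> {KL_div P Q |P. P \<in> probs \<mu> \<and> v \<le> TV \<mu> P Q}"
        using P(1) P(2) unfolding d_def by (intro CollectI exI[of _ P]) simp
      then have "Dstar \<mu> v Q \<le> KL_div P Q" unfolding Dstar_def by (rule Inf_lower)
      then show ?thesis using P unfolding g_def by simp
    qed
    have cont: "isCont g \<beta>"
      unfolding g_def KL2r_def using bd bl1 d0 by (auto intro!: continuous_intros)
    have KLb: "KL2 (\<beta> - d) \<beta> = ereal (g \<beta>)"
      unfolding g_def using bd bl1 d0 by (intro KL2_eq) auto
    show ?thesis unfolding KLb
    proof (rule ereal_le_epsilon2)
      fix e :: real assume e: "0 < e"
      from cont e obtain \<delta> where \<delta>: "\<delta> > 0" "\<And>y. \<bar>y - \<beta>\<bar> < \<delta> \<Longrightarrow> \<bar>g y - g \<beta>\<bar> < e"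
        unfolding continuous_at_eps_delta dist_real_def by blast
      define S where "S = {x \<in> range_meas Q. x \<ge> 1/2}"
      have "1 \<in> S" unfolding S_def range_meas_def using Q.prob_space by force
      then have Sne: "S \<noteq> {}" by auto
      have "Inf S < min (\<beta> + \<delta>) 1" using \<delta> bl1 unfolding S_def \<beta>_def balance_coeff_def by simp
      then obtain x where xS: "x \<in> S" and xl: "x < min (\<beta> + \<delta>) 1" using cInf_lessD[OF Sne] by blast
      have xr: "x \<in> range_meas Q" "1/2 \<le> x" using xS unfolding S_def by auto
      have xb: "\<beta> \<le> x" unfolding \<beta>_def by (rule balance_facts(2)[OF Qs(1) xr])
      have "\<bar>g x - g \<beta>\<bar> < e" using \<delta>(2)[of x] xl xb by simp
      then have "g x \<le> g \<beta> + e" by simp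
      moreover have "Dstar \<mu> v Q \<le> ereal (g x)" using pt[OF xr] xl by simp
      ultimately show "Dstar \<mu> v Q \<le> ereal (g \<beta>) + ereal e" by (simp add: order_trans)
    qed
  qed
  show ?thesis using lower upper unfolding \<beta>_def d_def by (rule antisym[rotated])
qed


end
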